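(* If a topological space $X$ is productively countably tight, then $\mathsf{S}_1(\Omega_x, \Omega_x)$ holds for each $x \in X$; that is, for every $x \in X$ and every sequence $(A_n)_{n \in \omega}$ of elements of $\Omega_x$ one can select $a_n \in A_n$ such that $\{a_n : n \in \omega\} \in \Omega_x$.
   Context: For a point $x$ of a space $X$, $\Omega_x$ denotes the collection of all sets $A \subset X$ such that $x \notin A$ and $x \in \overline{A}$. A space is countably tight if for every point $y$ and every set $A$ with $y \in \overline{A}$ there is a countable $B \subset A$ with $y \in \overline{B}$. $X$ is productively countably tight if $X \times Y$ is countably tight for every countably tight space $Y$. *)

theory Defs
  imports "HOL-Analysis.Analysis"
begin

definition Omega_pt :: "'a topology \<Rightarrow> 'a \<Rightarrow> 'a set set" where
  "Omega_pt X x = {A. A \<subseteq> topspace X \<and> x \<notin> A \<and> x \<in> X closure_of A}"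

definition countably_tight :: "'a topology \<Rightarrow> bool" where
  "countably_tight X \<longleftrightarrow>
     (\<forall>y A. y \<in> topspace X \<and> A \<subseteq> topspace X \<and> y \<in> X closure_of A \<longrightarrow>
        (\<exists>B. B \<subseteq> A \<and> countable B \<and> y \<in> X closure_of B))"

text \<open>HOL cannot quantify over all types inside a formula; the test spaces Y
  range over all topologies on the (large) type of sets of sets of pairs
  ('a \<times> nat), which contains (up to homeomorphism) every space of cardinality
  at most 2^(2^(|'a| * aleph_0)).\<close>
definition productively_countably_tight :: "'a topology \<Rightarrow> bool" where
  "productively_countably_tight X \<longleftrightarrow>
     (\<forall>Y :: (('a \<times> nat) set set) topology.
        countably_tight Y \<longrightarrow> countably_tight (prod_topology X Y))"

definition S1_Omega :: "'a topology \<Rightarrow> 'a \<Rightarrow> bool" where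
  "S1_Omega X x \<longleftrightarrow>
     (\<forall>A :: nat \<Rightarrow> 'a set. (\<forall>n. A n \<in> Omega_pt X x) \<longrightarrow>
        (\<exists>a. (\<forall>n. a n \<in> A n) \<and> range a \<in> Omega_pt X x))"

end

theory Submission
  imports Defs
begin

definition ewk :: "(nat \<Rightarrow> 'a) \<Rightarrow> nat \<Rightarrow> ('a \<times> nat) set set" where
  "ewk w k = range (\<lambda>n. {(w n, n + k)})"

lemma ewk_ne: "ewk w k \<noteq> {}"
  by (simp add: ewk_def)

lemma ewk_inj: assumes "ewk w k = ewk w' k'" shows "w = w' \<and> k = k'"
proof -
  have a: "\<exists>m. (w n, n + k) = (w' m, m + k')" for n
  proof -
    have "{(w n, n + k)} \<in> ewk w k" by (simp add: ewk_def)
    hence "{(w n, n + k)} \<in> ewk w' k'" using assms by simp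
    thus ?thesis by (auto simp: ewk_def)
  qed
  have b: "\<exists>m. (w' n, n + k') = (w m, m + k)" for n
  proof -
    have "{(w' n, n + k')} \<in> ewk w' k'" by (simp add: ewk_def)
    hence "{(w' n, n + k')} \<in> ewk w k" using assms by simp
    thus ?thesis by (auto simp: ewk_def)
  qed
  have "k \<ge> k'" using a[of 0] by auto
  moreover have "k' \<ge> k" using b[of 0] by auto
  ultimately have kk: "k = k'" by simp
  have "w n = w' n" for n using a[of n] kk by auto
  with kk show ?thesis by auto
qed

definition fancar :: "(nat \<Rightarrow> 'a) set \<Rightarrow> ('a \<times> nat) set set set" where
  "fancar S = insert {} ((\<lambda>(w,k). ewk w k) ` (S \<times> UNIV))"

definition fanopen :: "(nat \<Rightarrow> 'a) set \<Rightarrow> ('a \<times> nat) set set set \<Rightarrow> bool" where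
  "fanopen S U \<longleftrightarrow> U \<subseteq> fancar S \<and>
     ({} \<in> U \<longrightarrow> (\<exists>\<phi>. \<forall>w\<in>S. \<forall>k\<ge>\<phi> w. ewk w k \<in> U))"

lemma istopology_fan: "istopology (fanopen S)"
  unfolding istopology_def
proof (intro conjI allI impI)
  fix U V assume U: "fanopen S U" and V: "fanopen S V"
  have sub: "U \<inter> V \<subseteq> fancar S" using U unfolding fanopen_def by blast
  show "fanopen S (U \<inter> V)"
  proof (cases "{} \<in> U \<inter> V")
    case True
    then obtain \<phi>1 \<phi>2 where "\<forall>w\<in>S. \<forall>k\<ge>\<phi>1 w. ewk w k \<in> U" "\<forall>w\<in>S. \<forall>k\<ge>\<phi>2 w. ewk w k \<in> V"
      using U V unfolding fanopen_def by blast
    hence m: "\<forall>w\<in>S. \<forall>k\<ge>max (\<phi>1 w) (\<phi>2 w). ewk w k \<in> U \<inter> V" by auto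
    show ?thesis unfolding fanopen_def
      by (intro conjI impI sub exI[of _ "\<lambda>w. max (\<phi>1 w) (\<phi>2 w)"]) (use m in blast)
  next
    case False
    thus ?thesis using sub unfolding fanopen_def by blast
  qed
next
  fix K assume K: "\<forall>U\<in>K. fanopen S U"
  have sub: "\<Union>K \<subseteq> fancar S" using K unfolding fanopen_def by blast
  show "fanopen S (\<Union>K)"
  proof (cases "{} \<in> \<Union>K")
    case True
    then obtain U where "U \<in> K" "{} \<in> U" by blast
    then obtain \<phi> where "\<forall>w\<in>S. \<forall>k\<ge>\<phi> w. ewk w k \<in> U" using K unfolding fanopen_def by blast
    hence m: "\<forall>w\<in>S. \<forall>k\<ge>\<phi> w. ewk w k \<in> \<Union>K" using \<open>U \<in> K\<close> by blast
    show ?thesis unfolding fanopen_def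
      by (intro conjI impI sub exI[of _ \<phi>]) (use m in blast)
  next
    case False
    thus ?thesis using sub unfolding fanopen_def by blast
  qed
qed

lemma openin_fan: "openin (topology (fanopen S)) = fanopen S"
  by (simp add: istopology_fan)

lemma topspace_fan: "topspace (topology (fanopen S)) = fancar S"
proof -
  have o: "fanopen S (fancar S)"
    unfolding fanopen_def by (rule conjI, simp, rule impI, rule exI[of _ "\<lambda>_. 0"], auto simp: fancar_def)
  have "\<Union>{U. fanopen S U} \<subseteq> fancar S" unfolding fanopen_def by blast
  moreover have "fancar S \<subseteq> \<Union>{U. fanopen S U}" using o by blast
  ultimately show ?thesis unfolding topspace_def openin_fan by blast
qed

lemma fancar_ewk: "w \<in> S \<Longrightarrow> ewk w k \<in> fancar S"
  unfolding fancar_def by (intro insertI2 rev_image_eqI[of "(w,k)"]) auto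

lemma ct_fan: "countably_tight (topology (fanopen S))"
  unfolding countably_tight_def
proof (intro allI impI)
  let ?Y = "topology (fanopen S)"
  fix y T assume H: "y \<in> topspace ?Y \<and> T \<subseteq> topspace ?Y \<and> y \<in> ?Y closure_of T"
  show "\<exists>B\<subseteq>T. countable B \<and> y \<in> ?Y closure_of B"
  proof (cases "y \<in> T")
    case True
    have "y \<in> ?Y closure_of {y}" using H by (auto simp: in_closure_of)
    thus ?thesis using True by (intro exI[of _ "{y}"]) auto
  next
    case False
    have y0: "y = {}"
    proof (rule ccontr)
      assume "y \<noteq> {}"
      then obtain w k where wk: "w \<in> S" "y = ewk w k" using H topspace_fan[of S] by (auto simp: fancar_def)
      have "fanopen S {y}" using wk ewk_ne fancar_ewk[of w S k] unfolding fanopen_def by auto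
      hence "openin ?Y {y}" by (simp add: openin_fan)
      thus False using H False unfolding in_closure_of by blast
    qed
    have "\<exists>w\<in>S. infinite {k. ewk w k \<in> T}"
    proof (rule ccontr)
      assume "\<not> ?thesis"
      hence "\<forall>w\<in>S. \<exists>m. \<forall>k. ewk w k \<in> T \<longrightarrow> k < m"
        by (auto simp: finite_nat_set_iff_bounded)
      then obtain \<phi> where \<phi>: "\<forall>w\<in>S. \<forall>k. ewk w k \<in> T \<longrightarrow> k < \<phi> w" by metis
      let ?U = "topspace ?Y - T"
      have "\<forall>w\<in>S. \<forall>k\<ge>\<phi> w. ewk w k \<in> fancar S - T"
      proof (intro ballI allI impI)
        fix w k assume "w \<in> S" "\<phi> w \<le> k"
        thus "ewk w k \<in> fancar S - T" using \<phi> fancar_ewk[of w S k] by force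
      qed
      hence "fanopen S ?U"
        unfolding fanopen_def topspace_fan by blast
      hence "openin ?Y ?U" by (simp add: openin_fan)
      thus False using H False y0 unfolding in_closure_of by blast
    qed
    then obtain w where w: "w \<in> S" "infinite {k. ewk w k \<in> T}" by blast
    let ?B = "ewk w ` {k. ewk w k \<in> T}"
    have "y \<in> ?Y closure_of ?B"
      unfolding in_closure_of
    proof (intro conjI allI impI)
      show "y \<in> topspace ?Y" using H by blast
      fix V assume V: "y \<in> V \<and> openin ?Y V"
      then obtain \<phi> where "\<forall>w\<in>S. \<forall>k\<ge>\<phi> w. ewk w k \<in> V"
        using y0 by (auto simp: openin_fan fanopen_def)
      moreover obtain k where "k \<ge> \<phi> w" "ewk w k \<in> T"
        using w(2) unfolding infinite_nat_iff_unbounded_le by blast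
      ultimately show "\<exists>z. z \<in> ?B \<and> z \<in> V" using w(1) by blast
    qed
    thus ?thesis by (intro exI[of _ ?B]) auto
  qed
qed

lemma ct_X:
  assumes "productively_countably_tight X"
  shows "countably_tight X"
  unfolding countably_tight_def
proof (intro allI impI)
  fix y A assume H: "y \<in> topspace X \<and> A \<subseteq> topspace X \<and> y \<in> X closure_of A"
  define Y :: "(('a \<times> nat) set set) topology" where "Y = discrete_topology {{}}"
  have ctY: "countably_tight Y"
    unfolding countably_tight_def Y_def
    by (metis countable_finite finite.emptyI finite_insert finite_subset order_refl topspace_discrete_topology)
  have ctP: "countably_tight (prod_topology X Y)"
    using assms ctY unfolding productively_countably_tight_def by blast
  have clY: "Y closure_of {{}} = {{}}" unfolding Y_def by (simp add: discrete_topology_closure_of)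
  have "(y, {}) \<in> prod_topology X Y closure_of (A \<times> {{}})"
    using H clY by (simp add: closure_of_Times)
  moreover have "(y, {}) \<in> topspace (prod_topology X Y)" "A \<times> {{}} \<subseteq> topspace (prod_topology X Y)"
    using H by (auto simp: Y_def)
  ultimately obtain B' where B': "B' \<subseteq> A \<times> {{}}" "countable B'" "(y, {}) \<in> prod_topology X Y closure_of B'"
    using ctP unfolding countably_tight_def by blast
  have "B' \<subseteq> fst ` B' \<times> {{}}" using B'(1) by force
  hence "(y, {}) \<in> prod_topology X Y closure_of (fst ` B' \<times> {{}})"
    using B'(3) closure_of_mono by blast
  hence "y \<in> X closure_of (fst ` B')" by (simp add: closure_of_Times)
  moreover have "fst ` B' \<subseteq> A" using B'(1) by force
  ultimately show "\<exists>B\<subseteq>A. countable B \<and> y \<in> X closure_of B" using B'(2) by blast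
qed

theorem corollary2p8:
  fixes X :: "'a topology"
  assumes "productively_countably_tight X"
  shows "\<forall>x \<in> topspace X. S1_Omega X x"
proof (intro ballI)
  fix x assume x: "x \<in> topspace X"
  show "S1_Omega X x" unfolding S1_Omega_def
  proof (intro allI impI)
    fix A :: "nat \<Rightarrow> 'a set" assume A: "\<forall>n. A n \<in> Omega_pt X x"
    show "\<exists>a. (\<forall>n. a n \<in> A n) \<and> range a \<in> Omega_pt X x"
    proof (rule ccontr)
      assume nS: "\<not> (\<exists>a. (\<forall>n. a n \<in> A n) \<and> range a \<in> Omega_pt X x)"
      have ctX: "countably_tight X" by (rule ct_X[OF assms])
      have Atop: "\<And>n. A n \<subseteq> topspace X" "\<And>n. x \<notin> A n" "\<And>n. x \<in> X closure_of A n"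
        using A unfolding Omega_pt_def by auto
      have "\<forall>n. \<exists>B. B \<subseteq> A n \<and> countable B \<and> x \<in> X closure_of B"
        using ctX Atop x unfolding countably_tight_def by blast
      then obtain B where B: "\<And>n. B n \<subseteq> A n" "\<And>n. countable (B n)" "\<And>n. x \<in> X closure_of B n"
        by metis
      have noacc: "\<exists>U. openin X U \<and> x \<in> U \<and> U \<inter> range h = {}" if h: "\<forall>n. h n \<in> B n" for h
      proof -
        have "range h \<notin> Omega_pt X x" using nS h B(1) by blast
        moreover have "range h \<subseteq> topspace X" "x \<notin> range h" using h B(1) Atop by blast+
        ultimately have "x \<notin> X closure_of range h" unfolding Omega_pt_def by blast
        thus ?thesis using x unfolding in_closure_of by blast
      qed
      have Bne: "\<And>n. B n \<noteq> {}" using B(3) by (metis closure_of_empty empty_iff)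
      define S where "S = {w. \<forall>n. w n \<in> B n}"
      define L where "L = (\<Union>n. B n)"
      have cL: "countable L" unfolding L_def using B(2) by blast
      define code where "code = to_nat_on (lists L)"
      have code_inj: "inj_on code (lists L)" unfolding code_def using cL by blast
      define pos where "pos w k = code (map w [0..<k])" for w :: "nat \<Rightarrow> 'a" and k
      have pos_eq: "k = k' \<and> (\<forall>i<k. w i = w' i)"
        if "w \<in> S" "w' \<in> S" "pos w k = pos w' k'" for w w' k k'
      proof -
        have "\<forall>i. w i \<in> L" "\<forall>i. w' i \<in> L" using that(1,2) unfolding S_def L_def by auto
        hence "map w [0..<k] \<in> lists L" "map w' [0..<k'] \<in> lists L" by auto
        hence e: "map w [0..<k] = map w' [0..<k']"
          using inj_onD[OF code_inj that(3)[unfolded pos_def]] by blast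
        hence "k = k'" by (metis length_map length_upt minus_nat.diff_0)
        moreover have "\<forall>i<k. w i = w' i"
        proof (intro allI impI)
          fix i assume "i < k"
          hence "map w [0..<k] ! i = map w' [0..<k'] ! i" using e by simp
          thus "w i = w' i" using \<open>i < k\<close> \<open>k = k'\<close> by simp
        qed
        ultimately show ?thesis by blast
      qed
      define Y where "Y = topology (fanopen S)"
      have ctY: "countably_tight Y" unfolding Y_def by (rule ct_fan)
      have ctP: "countably_tight (prod_topology X Y)"
        using assms ctY unfolding productively_countably_tight_def by blast
      have openY: "openin Y = fanopen S" unfolding Y_def by (rule openin_fan)
      have topY: "topspace Y = fancar S"
        unfolding Y_def by (rule topspace_fan)
      define D where "D = {(w (pos w k), ewk w k) | w k. w \<in> S}"
      have Btop: "\<And>n. B n \<subseteq> topspace X" using B(1) Atop(1) by blast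
      have Dsub: "D \<subseteq> topspace (prod_topology X Y)"
        unfolding D_def topspace_prod_topology topY fancar_def S_def using Btop by force
      have xin: "(x, {}) \<in> topspace (prod_topology X Y)"
        using x unfolding topspace_prod_topology topY fancar_def by simp
      have cl: "(x, {}) \<in> prod_topology X Y closure_of D"
        unfolding in_closure_of
      proof (intro conjI allI impI)
        show "(x, {}) \<in> topspace (prod_topology X Y)" by (rule xin)
        fix W assume W: "(x, {}) \<in> W \<and> openin (prod_topology X Y) W"
        then obtain U V where UV: "openin X U" "openin Y V" "x \<in> U" "{} \<in> V" "U \<times> V \<subseteq> W"
          unfolding openin_prod_topology_alt by blast
        have "fanopen S V" using UV(2) openY by simp
        then obtain \<phi> where \<phi>: "\<forall>w\<in>S. \<forall>k\<ge>\<phi> w. ewk w k \<in> V"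
          using UV(4) unfolding fanopen_def by blast
        have "\<forall>n. \<exists>b. b \<in> B n \<and> b \<in> U" using B(3) UV(1,3) unfolding in_closure_of by blast
        from choice[OF this] obtain w where w: "\<forall>n. w n \<in> B n \<and> w n \<in> U" by blast
        have wS: "w \<in> S" unfolding S_def using w by blast
        have "(w (pos w (\<phi> w)), ewk w (\<phi> w)) \<in> D" unfolding D_def using wS by blast
        moreover have "ewk w (\<phi> w) \<in> V" using \<phi> wS by blast
        moreover have "w (pos w (\<phi> w)) \<in> U" using w by blast
        ultimately have "(w (pos w (\<phi> w)), ewk w (\<phi> w)) \<in> D \<inter> W" using UV(5) by blast
        hence "(w (pos w (\<phi> w)), ewk w (\<phi> w)) \<in> D \<and> (w (pos w (\<phi> w)), ewk w (\<phi> w)) \<in> W"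
          by blast
        thus "\<exists>z. z \<in> D \<and> z \<in> W" by blast
      qed
      obtain C where C: "C \<subseteq> D" "countable C" "(x, {}) \<in> prod_topology X Y closure_of C"
        using ctP Dsub xin cl unfolding countably_tight_def by blast
      define J where "J = {w \<in> S. \<exists>k. ewk w k \<in> snd ` C}"
      have einj: "inj_on (\<lambda>(w,k). ewk w k) (S \<times> UNIV)"
        unfolding inj_on_def by (auto dest: ewk_inj)
      have cJ: "countable J"
      proof -
        have "J \<subseteq> (\<lambda>z. fst (inv_into (S \<times> UNIV) (\<lambda>(w,k). ewk w k) z)) ` (snd ` C)"
        proof
          fix w assume "w \<in> J"
          then obtain k where k: "w \<in> S" "ewk w k \<in> snd ` C" unfolding J_def by blast
          have "inv_into (S \<times> UNIV) (\<lambda>(w,k). ewk w k) (ewk w k) = (w, k)"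
            using inv_into_f_f[OF einj, of "(w,k)"] k(1) by simp
          hence "w = fst (inv_into (S \<times> UNIV) (\<lambda>(w,k). ewk w k) (ewk w k))" by simp
          thus "w \<in> (\<lambda>z. fst (inv_into (S \<times> UNIV) (\<lambda>(w,k). ewk w k) z)) ` (snd ` C)"
            using k(2) by (rule image_eqI)
        qed
        moreover have "countable ((\<lambda>z. fst (inv_into (S \<times> UNIV) (\<lambda>(w,k). ewk w k) z)) ` (snd ` C))"
          using C(2) by (intro countable_image)
        ultimately show ?thesis by (rule countable_subset)
      qed
      define \<iota> where "\<iota> = to_nat_on J"
      have \<iota>inj: "inj_on \<iota> J" unfolding \<iota>_def using cJ by blast
      define d where "d w w' = (LEAST i. w i \<noteq> w' i)" for w w' :: "nat \<Rightarrow> 'a"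
      define N where "N w = Suc (Max (insert 0 ((\<lambda>w'. d w w') ` {w'\<in>J. \<iota> w' < \<iota> w})))" for w
      have finJ: "finite {w'\<in>J. \<iota> w' < \<iota> w}" for w
      proof -
        have "\<iota> ` {w'\<in>J. \<iota> w' < \<iota> w} \<subseteq> {..< \<iota> w}" by auto
        hence "finite (\<iota> ` {w'\<in>J. \<iota> w' < \<iota> w})" by (rule finite_subset) simp
        moreover have "inj_on \<iota> {w'\<in>J. \<iota> w' < \<iota> w}" using \<iota>inj by (rule inj_on_subset) blast
        ultimately show ?thesis by (rule finite_imageD)
      qed
      have key0: False
        if "w \<in> J" "w' \<in> J" "w \<noteq> w'" "\<iota> w' < \<iota> w" "k \<ge> N w" "pos w k = pos w' k'" for w w' k k'
      proof -
        have "d w w' \<le> Max (insert 0 ((\<lambda>w'. d w w') ` {w'\<in>J. \<iota> w' < \<iota> w}))"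
          using finJ[of w] that(2,4) by (intro Max_ge) auto
        hence "d w w' < k" using that(5) unfolding N_def by simp
        moreover have "\<forall>i<k. w i = w' i" using pos_eq[of w w' k k'] that(1,2,6) unfolding J_def by blast
        moreover have "w (d w w') \<noteq> w' (d w w')"
        proof -
          have "\<exists>i. w i \<noteq> w' i" using that(3) by blast
          thus ?thesis unfolding d_def by (rule LeastI_ex)
        qed
        ultimately show False by blast
      qed
      have key: "w = w'"
        if "w \<in> J" "w' \<in> J" "k \<ge> N w" "k' \<ge> N w'" "pos w k = pos w' k'" for w w' k k'
      proof (rule ccontr)
        assume ne: "w \<noteq> w'"
        hence "\<iota> w \<noteq> \<iota> w'" using \<iota>inj that(1,2) unfolding inj_on_def by blast
        hence "\<iota> w' < \<iota> w \<or> \<iota> w < \<iota> w'" by arith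
        thus False
        proof
          assume "\<iota> w' < \<iota> w" thus False using key0[of w w' k k'] that ne by blast
        next
          assume "\<iota> w < \<iota> w'" thus False using key0[of w' w k' k] that ne by metis
        qed
      qed
      define P where "P n = (\<exists>w k. w \<in> J \<and> k \<ge> N w \<and> pos w k = n)" for n
      define h where "h n = (if P n then (SOME w. \<exists>k. w \<in> J \<and> k \<ge> N w \<and> pos w k = n) n
                             else (SOME b. b \<in> B n))" for n
      have hw: "h (pos w k) = w (pos w k)" if "w \<in> J" "k \<ge> N w" for w k
      proof -
        have Pn: "P (pos w k)" unfolding P_def using that by blast
        let ?w = "SOME w'. \<exists>k'. w' \<in> J \<and> k' \<ge> N w' \<and> pos w' k' = pos w k"
        have "\<exists>k'. ?w \<in> J \<and> k' \<ge> N ?w \<and> pos ?w k' = pos w k"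
          using someI_ex[of "\<lambda>w'. \<exists>k'. w' \<in> J \<and> k' \<ge> N w' \<and> pos w' k' = pos w k"] that by blast
        then obtain k' where k': "?w \<in> J" "k' \<ge> N ?w" "pos ?w k' = pos w k" by blast
        from key[OF k'(1) that(1) k'(2) that(2) k'(3)] have ww: "?w = w" .
        show ?thesis unfolding h_def using Pn ww by simp
      qed
      have hB: "\<forall>n. h n \<in> B n"
      proof
        fix n show "h n \<in> B n"
        proof (cases "P n")
          case True
          let ?w = "SOME w. \<exists>k. w \<in> J \<and> k \<ge> N w \<and> pos w k = n"
          have "\<exists>k. ?w \<in> J \<and> k \<ge> N ?w \<and> pos ?w k = n"
            using someI_ex[of "\<lambda>w. \<exists>k. w \<in> J \<and> k \<ge> N w \<and> pos w k = n"] True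
            unfolding P_def by blast
          hence "?w \<in> S" unfolding J_def by blast
          thus ?thesis unfolding h_def S_def using True by simp
        next
          case False
          thus ?thesis unfolding h_def using Bne[of n] by (simp add: some_in_eq)
        qed
      qed
      obtain U where U: "openin X U" "x \<in> U" "U \<inter> range h = {}" using noacc[OF hB] by blast
      define V where "V = insert {} ((\<lambda>(w,k). ewk w k) ` {(w,k). w \<in> S \<and> (w \<notin> J \<or> N w \<le> k)})"
      have Vin: "\<forall>w\<in>S. \<forall>k\<ge>(if w \<in> J then N w else 0). ewk w k \<in> V"
      proof (intro ballI allI impI)
        fix w k assume wk: "w \<in> S" "k \<ge> (if w \<in> J then N w else 0)"
        have "(w, k) \<in> {(w,k). w \<in> S \<and> (w \<notin> J \<or> N w \<le> k)}"
          using wk by (cases "w \<in> J") auto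
        hence "ewk w k \<in> (\<lambda>(w,k). ewk w k) ` {(w,k). w \<in> S \<and> (w \<notin> J \<or> N w \<le> k)}"
          by (rule rev_image_eqI) simp
        thus "ewk w k \<in> V" unfolding V_def by (rule insertI2)
      qed
      have Vsub: "V \<subseteq> fancar S"
        unfolding V_def fancar_def by (intro insert_mono image_mono) auto
      have "fanopen S V" unfolding fanopen_def
      proof (intro conjI impI)
        show "V \<subseteq> fancar S" by (rule Vsub)
        show "\<exists>\<phi>. \<forall>w\<in>S. \<forall>k\<ge>\<phi> w. ewk w k \<in> V"
          by (rule exI[of _ "\<lambda>w. if w \<in> J then N w else 0"]) (use Vin in blast)
      qed
      hence oV: "openin Y V" by (simp add: openY)
      have oUV: "openin (prod_topology X Y) (U \<times> V)" using U(1) oV by (simp add: openin_prod_Times_iff)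
      have mUV: "(x, {}) \<in> U \<times> V" using U(2) unfolding V_def by simp
      have cc: "\<forall>T. (x, {}) \<in> T \<and> openin (prod_topology X Y) T \<longrightarrow> (\<exists>y. y \<in> C \<and> y \<in> T)"
        using C(3) unfolding in_closure_of by (rule conjunct2)
      from cc[rule_format, OF conjI[OF mUV oUV]] obtain z where z: "z \<in> C" "z \<in> U \<times> V"
        by blast
      have zD: "z \<in> D" using C(1) z(1) by blast
      then obtain w k where wk: "z = (w (pos w k), ewk w k)" "w \<in> S" unfolding D_def by blast
      have "ewk w k \<in> snd ` C" using z(1) wk(1) by (metis image_eqI snd_conv)
      hence wJ: "w \<in> J" unfolding J_def using wk(2) by blast
      have "ewk w k \<in> V" using z(2) wk(1) by simp
      hence "ewk w k \<in> (\<lambda>(w,k). ewk w k) ` {(w,k). w \<in> S \<and> (w \<notin> J \<or> N w \<le> k)}"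
        using ewk_ne unfolding V_def by blast
      then obtain w' k' where w'k': "(w',k') \<in> {(w,k). w \<in> S \<and> (w \<notin> J \<or> N w \<le> k)}"
        "ewk w k = ewk w' k'" by auto
      from ewk_inj[OF w'k'(2)] have "w = w' \<and> k = k'" .
      hence "N w \<le> k" using w'k'(1) wJ by auto
      hence "h (pos w k) = w (pos w k)" by (rule hw[OF wJ])
      moreover have "w (pos w k) \<in> U" using z(2) wk(1) by simp
      ultimately have "h (pos w k) \<in> U \<inter> range h" by (metis IntI rangeI)
      thus False using U(3) by simp
    qed
  qed
qed
end
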